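(* Let $H$ be an oriented graph on $h$ vertices that is not $2$-colorable. Then the graph $K(H)$ contains a cycle $c_1c_2\dots c_\ell c_1$ of length $\ell\ge3$ with the following property: for any labeling of the vertices of $H$ by $1,\dots,h$ with corresponding backedge graph $G$, and for every order-preserving homomorphism $f:G\to K(H)$, there are vertices $u_1\in f^{-1}(c_1),\dots,u_\ell\in f^{-1}(c_\ell)$ such that $u_1u_2\dots u_\ell u_1$ is a cycle in $G$.
   Context: An oriented graph is $2$-colorable if its vertex set can be partitioned into $2$ sets each inducing an acyclic digraph. Graphs are undirected with vertex sets that are subsets of $\mathbb{N}$; subgraphs inherit labels. Given a labeling of $V(H)$ by $1,\dots,h$, the backedge graph of $H$ is the undirected graph on $[h]$ with $\{i,j\}$ an edge iff $i<j$ and $j\to i$ in $H$. An order-preserving homomorphism from $G$ to $G'$ is a map $f:V(G)\to V(G')$ with $f(i)\le f(j)$ whenever $i\le j$ and mapping edges to edges; an order-preserving isomorphism is one that is also a graph isomorphism. The ordered core of $G$ is a subgraph of $G$ with the fewest vertices among subgraphs to which $G$ has an order-preserving homomorphism. Let $\mathcal{C}(H)$ be the set of ordered cores of the backedge graphs of $H$ over all $h!$ labelings of $V(H)$ by $1,\dots,h$. $K(H)$ denotes a fixed element of $\mathcal{C}(H)$ such that for every $C\in\mathcal{C}(H)$, if there is an order-preserving homomorphism from $C$ to $K(H)$ then there is an order-preserving isomorphism between $C$ and $K(H)$. *)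

theory Defs
  imports Main
begin

definition oriented_graph :: "'a set \<Rightarrow> ('a \<times> 'a) set \<Rightarrow> bool" where
  "oriented_graph V A \<longleftrightarrow> finite V \<and> A \<subseteq> V \<times> V \<and> (\<forall>u v. (u, v) \<in> A \<longrightarrow> (v, u) \<notin> A)"

definition two_colorable :: "'a set \<Rightarrow> ('a \<times> 'a) set \<Rightarrow> bool" where
  "two_colorable V A \<longleftrightarrow>
     (\<exists>S. S \<subseteq> V \<and> acyclic (A \<inter> (S \<times> S)) \<and> acyclic (A \<inter> ((V - S) \<times> (V - S))))"

type_synonym ugraph = "nat set \<times> nat set set"

definition ugraph :: "ugraph \<Rightarrow> bool" where
  "ugraph G \<longleftrightarrow> finite (fst G) \<and>
     (\<forall>e\<in>snd G. \<exists>i j. e = {i, j} \<and> i \<noteq> j \<and> i \<in> fst G \<and> j \<in> fst G)"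

definition subgraph :: "ugraph \<Rightarrow> ugraph \<Rightarrow> bool" where
  "subgraph C G \<longleftrightarrow> ugraph C \<and> fst C \<subseteq> fst G \<and> snd C \<subseteq> snd G"

definition labeling :: "'a set \<Rightarrow> ('a \<Rightarrow> nat) \<Rightarrow> bool" where
  "labeling V \<sigma> \<longleftrightarrow> bij_betw \<sigma> V {1..card V}"

definition backedge_graph :: "'a set \<Rightarrow> ('a \<times> 'a) set \<Rightarrow> ('a \<Rightarrow> nat) \<Rightarrow> ugraph" where
  "backedge_graph V A \<sigma> =
     ({1..card V}, {{\<sigma> v, \<sigma> u} | u v. (u, v) \<in> A \<and> \<sigma> v < \<sigma> u})"

definition op_hom :: "(nat \<Rightarrow> nat) \<Rightarrow> ugraph \<Rightarrow> ugraph \<Rightarrow> bool" where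
  "op_hom f G G' \<longleftrightarrow>
     (\<forall>i\<in>fst G. f i \<in> fst G') \<and>
     (\<forall>i\<in>fst G. \<forall>j\<in>fst G. i \<le> j \<longrightarrow> f i \<le> f j) \<and>
     (\<forall>i j. {i, j} \<in> snd G \<longrightarrow> {f i, f j} \<in> snd G')"

definition op_iso :: "(nat \<Rightarrow> nat) \<Rightarrow> ugraph \<Rightarrow> ugraph \<Rightarrow> bool" where
  "op_iso f G G' \<longleftrightarrow> op_hom f G G' \<and> bij_betw f (fst G) (fst G') \<and>
     (\<forall>i\<in>fst G. \<forall>j\<in>fst G. {f i, f j} \<in> snd G' \<longrightarrow> {i, j} \<in> snd G)"

definition ordered_core :: "ugraph \<Rightarrow> ugraph \<Rightarrow> bool" where
  "ordered_core G C \<longleftrightarrow> subgraph C G \<and> (\<exists>f. op_hom f G C) \<and>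
     (\<forall>C'. subgraph C' G \<and> (\<exists>f. op_hom f G C') \<longrightarrow> card (fst C) \<le> card (fst C'))"

definition core_set :: "'a set \<Rightarrow> ('a \<times> 'a) set \<Rightarrow> ugraph set" where
  "core_set V A = {C. \<exists>\<sigma>. labeling V \<sigma> \<and> ordered_core (backedge_graph V A \<sigma>) C}"

definition is_K :: "'a set \<Rightarrow> ('a \<times> 'a) set \<Rightarrow> ugraph \<Rightarrow> bool" where
  "is_K V A K \<longleftrightarrow> K \<in> core_set V A \<and>
     (\<forall>C\<in>core_set V A. (\<exists>f. op_hom f C K) \<longrightarrow> (\<exists>g. op_iso g C K))"

definition is_cycle :: "ugraph \<Rightarrow> nat list \<Rightarrow> bool" where
  "is_cycle G cs \<longleftrightarrow> 3 \<le> length cs \<and> distinct cs \<and> set cs \<subseteq> fst G \<and>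
     (\<forall>i<length cs. {cs ! i, cs ! ((i + 1) mod length cs)} \<in> snd G)"

end

theory Submission
  imports Defs
begin

lemma acyc_by_rank:
  assumes "\<forall>u v. (u,v) \<in> R \<longrightarrow> (\<sigma> u::nat) < \<sigma> v"
  shows "acyclic R"
proof -
  have "(x,y) \<in> R\<^sup>+ \<Longrightarrow> \<sigma> x < \<sigma> y" for x y
  proof (induction rule: trancl_induct)
    case (base y) then show ?case using assms by blast
  next
    case (step y z) then show ?case using assms by (meson less_trans)
  qed
  thus ?thesis unfolding acyclic_def by blast
qed

lemma leaf_exists:
  assumes fin: "finite V" and ne: "V \<noteq> {}" and irr: "\<forall>i. \<not> R i i"
    and inV: "\<forall>i j. R i j \<longrightarrow> i \<in> V \<and> j \<in> V"
    and nocyc: "\<not>(\<exists>cs. 3 \<le> length cs \<and> distinct cs \<and> set cs \<subseteq> V \<and>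
        (\<forall>i<length cs. R (cs!i) (cs!((i+1) mod length cs))))"
  shows "\<exists>v\<in>V. \<forall>w w'. R v w \<longrightarrow> R v w' \<longrightarrow> w = w'"
proof -
  define P where "P p \<longleftrightarrow> p \<noteq> [] \<and> distinct p \<and> set p \<subseteq> V \<and>
      (\<forall>i. Suc i < length p \<longrightarrow> R (p!i) (p!Suc i))" for p
  obtain x where x: "x \<in> V" using ne by blast
  have "P [x]" using x by (simp add: P_def)
  moreover have "\<forall>p. P p \<longrightarrow> length p < Suc (card V)"
  proof (intro allI impI)
    fix p assume "P p"
    then have "card (set p) \<le> card V" "card (set p) = length p"
      using fin by (auto simp: P_def intro: card_mono distinct_card)
    thus "length p < Suc (card V)" by simp
  qed
  ultimately obtain p where pP: "P p" and pmax: "\<forall>q. P q \<longrightarrow> length q \<le> length p"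
    using Lattices_Big.ex_has_greatest_nat[of P "[x]" length "Suc (card V)"] by blast
  define n where "n = length p"
  define v where "v = last p"
  have n1: "n \<ge> 1" using pP by (cases p) (auto simp: P_def n_def)
  have v: "v = p!(n-1)" using pP by (simp add: P_def v_def n_def last_conv_nth)
  have vV: "v \<in> V" using pP n1 unfolding v P_def n_def by auto
  have key: "n \<ge> 2 \<and> w = p!(n-2)" if Rvw: "R v w" for w
  proof -
    have "w \<in> set p"
    proof (rule ccontr)
      assume wn: "w \<notin> set p"
      have "P (p @ [w])"
        unfolding P_def
      proof (intro conjI allI impI)
        show "distinct (p @ [w])" using pP wn by (simp add: P_def)
        show "set (p @ [w]) \<subseteq> V" using pP inV Rvw by (auto simp: P_def)
        fix i assume i: "Suc i < length (p @ [w])"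
        show "R ((p @ [w]) ! i) ((p @ [w]) ! Suc i)"
        proof (cases "Suc i < n")
          case True then show ?thesis using pP i by (simp add: P_def nth_append n_def)
        next
          case False
          then have "i = n - 1" using i by (simp add: n_def)
          then show ?thesis using Rvw v n1 by (simp add: nth_append n_def)
        qed
      qed simp
      then have "length (p@[w]) \<le> length p" using pmax by blast
      thus False by simp
    qed
    then obtain k where k: "k < n" "w = p!k" by (auto simp: in_set_conv_nth n_def)
    have kn1: "k \<noteq> n-1" using irr Rvw v k by auto
    moreover have "\<not> k < n-2"
    proof
      assume kl: "k < n-2"
      define cs where "cs = drop k p"
      have lc: "length cs = n - k" by (simp add: cs_def n_def)
      have "3 \<le> length cs \<and> distinct cs \<and> set cs \<subseteq> V \<and>
          (\<forall>i<length cs. R (cs!i) (cs!((i+1) mod length cs)))"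
      proof (intro conjI allI impI)
        show "3 \<le> length cs" using lc kl by simp
        show "distinct cs" using pP by (simp add: P_def cs_def)
        show "set cs \<subseteq> V" using pP set_drop_subset[of k p] by (auto simp: P_def cs_def)
        fix i assume i: "i < length cs"
        show "R (cs!i) (cs!((i+1) mod length cs))"
        proof (cases "Suc i < length cs")
          case True
          then have "(i+1) mod length cs = Suc i" by simp
          moreover have "Suc (k+i) < length p" using True lc n_def kl by simp
          ultimately show ?thesis using pP True by (simp add: P_def cs_def)
        next
          case False
          then have ii: "i = n - k - 1" using i lc by simp
          then have "i + 1 = length cs" using lc kl by simp
          then have "(i+1) mod length cs = 0" by simp
          moreover have "cs ! i = v" using ii v kl by (simp add: cs_def n_def)
          moreover have "cs ! 0 = w" using k kl by (simp add: cs_def n_def)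
          ultimately show ?thesis using Rvw by simp
        qed
      qed
      with nocyc show False by blast
    qed
    ultimately have "k = n-2" using k by linarith
    moreover have "n \<ge> 2" using kn1 k(1) by linarith
    ultimately show ?thesis using k by auto
  qed
  show ?thesis using vV key by metis
qed

lemma forest_2col:
  assumes "finite V" "\<forall>i. \<not> R i i"
    and "\<forall>i j. R i j \<longrightarrow> R j i"
    and "\<forall>i j. R i j \<longrightarrow> i \<in> V \<and> j \<in> V"
    and "\<not>(\<exists>cs. 3 \<le> length cs \<and> distinct cs \<and> set cs \<subseteq> V \<and>
        (\<forall>i<length cs. R (cs!i) (cs!((i+1) mod length cs))))"
  shows "\<exists>c. \<forall>i j. R i j \<longrightarrow> c i \<noteq> (c j :: bool)"
  using assms
proof (induction "card V" arbitrary: V R rule: less_induct)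
  case less
  show ?case
  proof (cases "V = {}")
    case True then show ?thesis using less.prems(4) by blast
  next
    case False
    obtain v where vV: "v \<in> V" and leaf: "\<forall>w w'. R v w \<longrightarrow> R v w' \<longrightarrow> w = w'"
      using leaf_exists[OF less.prems(1) False less.prems(2) less.prems(4) less.prems(5)] by blast
    define R' where "R' i j \<longleftrightarrow> R i j \<and> i \<noteq> v \<and> j \<noteq> v" for i j
    have "card (V - {v}) < card V" by (rule card_Diff1_less[OF less.prems(1) vV])
    moreover have "finite (V - {v})" using less.prems(1) by simp
    moreover have "\<forall>i. \<not> R' i i" using less.prems(2) by (simp add: R'_def)
    moreover have "\<forall>i j. R' i j \<longrightarrow> R' j i" using less.prems(3) by (auto simp: R'_def)
    moreover have "\<forall>i j. R' i j \<longrightarrow> i \<in> V - {v} \<and> j \<in> V - {v}" using less.prems(4) by (auto simp: R'_def)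
    moreover have "\<not>(\<exists>cs. 3 \<le> length cs \<and> distinct cs \<and> set cs \<subseteq> V - {v} \<and>
        (\<forall>i<length cs. R' (cs!i) (cs!((i+1) mod length cs))))"
    proof
      assume "\<exists>cs. 3 \<le> length cs \<and> distinct cs \<and> set cs \<subseteq> V - {v} \<and>
        (\<forall>i<length cs. R' (cs!i) (cs!((i+1) mod length cs)))"
      then obtain cs where cs: "3 \<le> length cs" "distinct cs" "set cs \<subseteq> V - {v}"
        "\<forall>i<length cs. R' (cs!i) (cs!((i+1) mod length cs))" by blast
      have "set cs \<subseteq> V" using cs(3) by blast
      moreover have "\<forall>i<length cs. R (cs!i) (cs!((i+1) mod length cs))"
        using cs(4) unfolding R'_def by blast
      ultimately show False using less.prems(5) cs(1,2) by blast
    qed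
    ultimately have "\<exists>c'. \<forall>i j. R' i j \<longrightarrow> c' i \<noteq> (c' j :: bool)"
      by (rule less.hyps[of "V - {v}" R'])
    then obtain c' where c': "\<forall>i j. R' i j \<longrightarrow> c' i \<noteq> (c' j :: bool)" by blast
    define c where "c = c'(v := \<not> c' (SOME w. R v w))"
    have "c i \<noteq> c j" if Rij: "R i j" for i j
    proof (cases "i = v")
      case True
      then have "j \<noteq> v" using Rij less.prems(2) by auto
      moreover have "R v (SOME w. R v w)" using Rij True by (intro someI[of "R v" j]) simp
      then have "(SOME w. R v w) = j" using Rij True leaf by blast
      ultimately show ?thesis using True by (simp add: c_def)
    next
      case iv: False
      show ?thesis
      proof (cases "j = v")
        case True
        have "R v i" using Rij True less.prems(3) by blast
        then have "R v (SOME w. R v w)" by (intro someI[of "R v" i])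
        then have "(SOME w. R v w) = i" using leaf \<open>R v i\<close> by blast
        then show ?thesis using True iv by (simp add: c_def)
      next
        case False
        then show ?thesis using c' Rij iv by (simp add: c_def R'_def)
      qed
    qed
    then show ?thesis by blast
  qed
qed

lemma mono_bij_id:
  fixes h :: "nat \<Rightarrow> nat"
  assumes fin: "finite S" and into: "\<forall>x\<in>S. h x \<in> S" and inj: "inj_on h S"
    and mono: "\<forall>x\<in>S. \<forall>y\<in>S. x \<le> y \<longrightarrow> h x \<le> h y"
  shows "\<forall>k\<in>S. h k = k"
proof (rule ccontr)
  assume "\<not> (\<forall>k\<in>S. h k = k)"
  then have ex: "\<exists>k. k \<in> S \<and> h k \<noteq> k" by blast
  define k where "k = (LEAST k. k \<in> S \<and> h k \<noteq> k)"
  have kS: "k \<in> S" and hk: "h k \<noteq> k" using LeastI_ex[OF ex] unfolding k_def by auto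
  have minl: "\<And>j. j \<in> S \<Longrightarrow> j < k \<Longrightarrow> h j = j"
    using not_less_Least unfolding k_def by blast
  have img: "h ` S = S"
    using card_subset_eq[OF fin, of "h ` S"] into card_image[OF inj] by auto
  show False
  proof (cases "h k < k")
    case True
    then have "h (h k) = h k" using minl into kS by blast
    then have "h k = k" using inj_onD[OF inj] kS into by blast
    then show False using hk by simp
  next
    case False
    then have gt: "h k > k" using hk by simp
    from kS img obtain m where m: "m \<in> S" "h m = k" by (metis imageE)
    show False
    proof (cases "m < k")
      case True then have "h m = m" using minl m(1) by blast
      then show False using True m(2) by simp
    next
      case False
      then have "k \<le> m" by simp
      then have "h k \<le> h m" using mono m(1) kS by blast
      then show False using gt m by simp
    qed
  qed
qed


lemma edge_in:
  assumes "ugraph K" "{a,b} \<in> snd K"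
  shows "a \<in> fst K \<and> b \<in> fst K"
proof -
  obtain i j where "{a,b} = {i,j}" "i \<in> fst K" "j \<in> fst K"
    using assms unfolding ugraph_def by blast
  then show ?thesis by (metis doubleton_eq_iff)
qed

lemma no_loop:
  assumes "ugraph K" shows "{a,a} \<notin> snd K"
proof
  assume "{a,a} \<in> snd K"
  then obtain i j where "{a,a} = {i,j}" "i \<noteq> j"
    using assms unfolding ugraph_def by blast
  then show False by (metis doubleton_eq_iff)
qed

lemma backedge_ugraph:
  assumes og: "oriented_graph V A" and lab: "labeling V \<sigma>"
  shows "ugraph (backedge_graph V A \<sigma>)"
  unfolding ugraph_def backedge_graph_def
proof (intro conjI ballI)
  fix e assume "e \<in> snd ({1..card V}, {{\<sigma> v, \<sigma> u} |u v. (u, v) \<in> A \<and> \<sigma> v < \<sigma> u})"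
  then obtain u v where e: "e = {\<sigma> v, \<sigma> u}" "(u,v) \<in> A" "\<sigma> v < \<sigma> u" by auto
  have "u \<in> V" "v \<in> V" using og e(2) unfolding oriented_graph_def by auto
  then have "\<sigma> u \<in> {1..card V}" "\<sigma> v \<in> {1..card V}"
    using lab unfolding labeling_def bij_betw_def by auto
  then show "\<exists>i j. e = {i, j} \<and> i \<noteq> j \<and> i \<in> fst ({1..card V}, {{\<sigma> v, \<sigma> u} |u v. (u, v) \<in> A \<and> \<sigma> v < \<sigma> u})
      \<and> j \<in> fst ({1..card V}, {{\<sigma> v, \<sigma> u} |u v. (u, v) \<in> A \<and> \<sigma> v < \<sigma> u})"
    using e by (intro exI[of _ "\<sigma> v"] exI[of _ "\<sigma> u"]) auto
qed simp

lemma core_exists: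
  assumes "ugraph G" shows "\<exists>C. ordered_core G C"
proof -
  define P where "P C \<longleftrightarrow> subgraph C G \<and> (\<exists>f. op_hom f G C)" for C
  have "op_hom id G G" unfolding op_hom_def by simp
  then have "P G" using assms unfolding P_def subgraph_def by blast
  then obtain C where "P C" "\<forall>C'. P C' \<longrightarrow> card (fst C) \<le> card (fst C')"
    using ex_has_least_nat[of P G "\<lambda>C. card (fst C)"] by blast
  then show ?thesis unfolding ordered_core_def P_def by blast
qed

lemma rigid:
  assumes oc: "ordered_core G0 K" and hh: "op_hom h K K"
  shows "\<forall>k\<in>fst K. h k = k"
proof -
  have sub: "subgraph K G0" and minK: "\<forall>C'. subgraph C' G0 \<and> (\<exists>f. op_hom f G0 C') \<longrightarrow> card (fst K) \<le> card (fst C')"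
    using oc unfolding ordered_core_def by auto
  obtain r0 where r0: "op_hom r0 G0 K" using oc unfolding ordered_core_def by blast
  have ugK: "ugraph K" using sub unfolding subgraph_def by blast
  have finK: "finite (fst K)" using ugK unfolding ugraph_def by blast
  have hin: "\<forall>x\<in>fst K. h x \<in> fst K" using hh unfolding op_hom_def by blast
  have hmono: "\<forall>x\<in>fst K. \<forall>y\<in>fst K. x \<le> y \<longrightarrow> h x \<le> h y" using hh unfolding op_hom_def by blast
  define K' where "K' = (h ` fst K, {e\<in>snd K. e \<subseteq> h ` fst K})"
  have ugK': "ugraph K'"
    unfolding ugraph_def K'_def
  proof (intro conjI ballI)
    show "finite (fst (h ` fst K, {e \<in> snd K. e \<subseteq> h ` fst K}))" using finK by simp
    fix e assume "e \<in> snd (h ` fst K, {e \<in> snd K. e \<subseteq> h ` fst K})"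
    then have e: "e \<in> snd K" "e \<subseteq> h ` fst K" by auto
    then obtain i j where "e = {i,j}" "i \<noteq> j" using ugK unfolding ugraph_def by blast
    then show "\<exists>i j. e = {i, j} \<and> i \<noteq> j \<and> i \<in> fst (h ` fst K, {e \<in> snd K. e \<subseteq> h ` fst K}) \<and>
              j \<in> fst (h ` fst K, {e \<in> snd K. e \<subseteq> h ` fst K})" using e(2) by auto
  qed
  have "fst K \<subseteq> fst G0" "snd K \<subseteq> snd G0" using sub unfolding subgraph_def by auto
  then have subK': "subgraph K' G0"
    using ugK' hin unfolding subgraph_def K'_def by auto
  have "op_hom (h \<circ> r0) G0 K'"
    unfolding op_hom_def
  proof (intro conjI allI impI ballI)
    fix i assume "i \<in> fst G0"
    then have "r0 i \<in> fst K" using r0 unfolding op_hom_def by blast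
    then show "(h \<circ> r0) i \<in> fst K'" unfolding K'_def by simp
  next
    fix i j assume "i \<in> fst G0" "j \<in> fst G0" "i \<le> j"
    then have "r0 i \<le> r0 j" "r0 i \<in> fst K" "r0 j \<in> fst K" using r0 unfolding op_hom_def by auto
    then show "(h \<circ> r0) i \<le> (h \<circ> r0) j" using hmono by simp
  next
    fix i j assume "{i, j} \<in> snd G0"
    then have ed: "{r0 i, r0 j} \<in> snd K" using r0 unfolding op_hom_def by blast
    then have "r0 i \<in> fst K" "r0 j \<in> fst K" using edge_in[OF ugK] by auto
    moreover have "{h (r0 i), h (r0 j)} \<in> snd K" using ed hh unfolding op_hom_def by blast
    ultimately show "{(h \<circ> r0) i, (h \<circ> r0) j} \<in> snd K'" unfolding K'_def by auto
  qed
  then have "card (fst K) \<le> card (h ` fst K)" using minK subK' unfolding K'_def by fastforce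
  moreover have "card (h ` fst K) \<le> card (fst K)" by (rule card_image_le[OF finK])
  ultimately have "card (h ` fst K) = card (fst K)" by simp
  then have "inj_on h (fst K)" by (rule eq_card_imp_inj_on[OF finK])
  then show ?thesis using mono_bij_id[OF finK hin _ hmono] by blast
qed


theorem corollary4p7:
  fixes V :: "'a set" and A :: "('a \<times> 'a) set" and K :: ugraph
  assumes "oriented_graph V A"
    and "\<not> two_colorable V A"
    and "is_K V A K"
  shows "\<exists>cs. is_cycle K cs \<and>
           (\<forall>\<sigma> f. labeling V \<sigma> \<and> op_hom f (backedge_graph V A \<sigma>) K \<longrightarrow>
              (\<exists>us. length us = length cs \<and>
                    (\<forall>i<length us. us ! i \<in> fst (backedge_graph V A \<sigma>) \<and> f (us ! i) = cs ! i) \<and>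
                    is_cycle (backedge_graph V A \<sigma>) us))"
proof -
  note og = assms(1)
  have Kc: "K \<in> core_set V A" and isoK: "\<forall>C\<in>core_set V A. (\<exists>f. op_hom f C K) \<longrightarrow> (\<exists>g. op_iso g C K)"
    using assms(3) unfolding is_K_def by auto
  obtain \<sigma>0 where lab0: "labeling V \<sigma>0" and oc: "ordered_core (backedge_graph V A \<sigma>0) K"
    using Kc unfolding core_set_def by blast
  define G0 where "G0 = backedge_graph V A \<sigma>0"
  have sub: "subgraph K G0" using oc unfolding ordered_core_def G0_def by blast
  obtain r0 where r0: "op_hom r0 G0 K" using oc unfolding ordered_core_def G0_def by blast
  have ugK: "ugraph K" using sub unfolding subgraph_def by blast
  have finK: "finite (fst K)" using ugK unfolding ugraph_def by blast
  have AV: "A \<subseteq> V \<times> V" and asym: "\<forall>u v. (u, v) \<in> A \<longrightarrow> (v, u) \<notin> A"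
    using og unfolding oriented_graph_def by auto
  have inj0: "inj_on \<sigma>0 V" using lab0 unfolding labeling_def bij_betw_def by blast
  have "\<exists>cs. is_cycle K cs"
  proof (rule ccontr)
    assume nc: "\<not> (\<exists>cs. is_cycle K cs)"
    define R where "R a b \<longleftrightarrow> {a,b} \<in> snd K" for a b
    have "\<exists>c. \<forall>i j. R i j \<longrightarrow> c i \<noteq> (c j :: bool)"
    proof (rule forest_2col[OF finK])
      show "\<forall>i. \<not> R i i" using no_loop[OF ugK] unfolding R_def by blast
      show "\<forall>i j. R i j \<longrightarrow> R j i" unfolding R_def by (simp add: insert_commute)
      show "\<forall>i j. R i j \<longrightarrow> i \<in> fst K \<and> j \<in> fst K" using edge_in[OF ugK] unfolding R_def by blast
      show "\<not>(\<exists>cs. 3 \<le> length cs \<and> distinct cs \<and> set cs \<subseteq> fst K \<and>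
        (\<forall>i<length cs. R (cs!i) (cs!((i+1) mod length cs))))"
        using nc unfolding R_def is_cycle_def by blast
    qed
    then obtain c where c: "\<forall>i j. R i j \<longrightarrow> c i \<noteq> (c j :: bool)" by blast
    have fwd: "\<sigma>0 u < \<sigma>0 v" if uv: "(u,v) \<in> A" and cc: "c (r0 (\<sigma>0 u)) = c (r0 (\<sigma>0 v))" for u v
    proof (rule ccontr)
      assume "\<not> \<sigma>0 u < \<sigma>0 v"
      moreover have "u \<in> V" "v \<in> V" using uv AV by auto
      moreover have "u \<noteq> v" using uv asym by blast
      ultimately have lt: "\<sigma>0 v < \<sigma>0 u" using inj0 by (metis inj_on_def linorder_neqE_nat)
      have "{\<sigma>0 v, \<sigma>0 u} \<in> snd G0" unfolding G0_def backedge_graph_def using uv lt by auto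
      then have "R (r0 (\<sigma>0 v)) (r0 (\<sigma>0 u))" using r0 unfolding op_hom_def R_def by blast
      then show False using c cc by metis
    qed
    define S where "S = {x\<in>V. c (r0 (\<sigma>0 x))}"
    have "S \<subseteq> V" unfolding S_def by blast
    moreover have "acyclic (A \<inter> (S \<times> S))"
      by (rule acyc_by_rank[where \<sigma>=\<sigma>0]) (auto simp: S_def intro!: fwd)
    moreover have "acyclic (A \<inter> ((V - S) \<times> (V - S)))"
      by (rule acyc_by_rank[where \<sigma>=\<sigma>0]) (auto simp: S_def intro!: fwd)
    ultimately have "two_colorable V A" unfolding two_colorable_def by blast
    then show False using assms(2) by blast
  qed
  then obtain cs where cyc: "is_cycle K cs" by blast
  have lift: "\<exists>us. length us = length cs \<and>
                    (\<forall>i<length us. us ! i \<in> fst (backedge_graph V A \<sigma>) \<and> f (us ! i) = cs ! i) \<and>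
                    is_cycle (backedge_graph V A \<sigma>) us"
    if lab: "labeling V \<sigma>" and fh: "op_hom f (backedge_graph V A \<sigma>) K" for \<sigma> f
  proof -
    define G where "G = backedge_graph V A \<sigma>"
    have ugG: "ugraph G" using backedge_ugraph[OF og lab] unfolding G_def .
    obtain C where ocC: "ordered_core G C" using core_exists[OF ugG] by blast
    have CC: "C \<in> core_set V A" using ocC lab unfolding core_set_def G_def by blast
    have subC: "fst C \<subseteq> fst G" "snd C \<subseteq> snd G" using ocC unfolding ordered_core_def subgraph_def by auto
    have ugC: "ugraph C" using ocC unfolding ordered_core_def subgraph_def by auto
    have "op_hom f C K" using fh subC unfolding op_hom_def G_def by blast
    then obtain g where g: "op_iso g C K" using isoK CC by blast
    have bij: "bij_betw g (fst C) (fst K)" using g unfolding op_iso_def by blast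
    have gmono: "\<forall>i\<in>fst C. \<forall>j\<in>fst C. i \<le> j \<longrightarrow> g i \<le> g j" using g unfolding op_iso_def op_hom_def by blast
    have grefl: "\<forall>i\<in>fst C. \<forall>j\<in>fst C. {g i, g j} \<in> snd K \<longrightarrow> {i, j} \<in> snd C" using g unfolding op_iso_def by blast
    define e where "e = inv_into (fst C) g"
    have eC: "e k \<in> fst C" and ge: "g (e k) = k" if "k \<in> fst K" for k
      using that bij unfolding e_def
      by (auto simp: bij_betw_def intro: inv_into_into f_inv_into_f)
    have einj: "inj_on e (fst K)" by (metis ge inj_onI)
    have eedge: "{e k, e l} \<in> snd G" if "{k,l} \<in> snd K" for k l
    proof -
      have kl: "k \<in> fst K" "l \<in> fst K" using edge_in[OF ugK that] by auto
      then have "{g (e k), g (e l)} \<in> snd K" using that ge by simp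
      then have "{e k, e l} \<in> snd C" using grefl eC kl by blast
      then show ?thesis using subC by blast
    qed
    have emono: "e k \<le> e l" if "k \<in> fst K" "l \<in> fst K" "k \<le> l" for k l
    proof (rule ccontr)
      assume "\<not> e k \<le> e l"
      then have "e l \<le> e k" by simp
      then have "l \<le> k" using gmono eC ge that by metis
      then have "k = l" using that by simp
      then show False using \<open>\<not> e k \<le> e l\<close> by simp
    qed
    have fG: "\<forall>i\<in>fst G. f i \<in> fst K" "\<forall>i\<in>fst G. \<forall>j\<in>fst G. i \<le> j \<longrightarrow> f i \<le> f j"
      "\<forall>i j. {i, j} \<in> snd G \<longrightarrow> {f i, f j} \<in> snd K"
      using fh unfolding op_hom_def G_def by auto
    have "op_hom (f \<circ> e) K K"
      unfolding op_hom_def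
    proof (intro conjI allI impI ballI)
      fix i assume "i \<in> fst K" then show "(f \<circ> e) i \<in> fst K" using eC subC fG by auto
    next
      fix i j assume "i \<in> fst K" "j \<in> fst K" "i \<le> j"
      then have "e i \<le> e j" "e i \<in> fst G" "e j \<in> fst G" using emono eC subC by auto
      then show "(f \<circ> e) i \<le> (f \<circ> e) j" using fG(2) by simp
    next
      fix i j assume "{i, j} \<in> snd K"
      then show "{(f \<circ> e) i, (f \<circ> e) j} \<in> snd K" using eedge fG(3) by auto
    qed
    then have fe: "\<forall>k\<in>fst K. f (e k) = k" using rigid[OF oc, of "f \<circ> e"] by simp
    have csK: "set cs \<subseteq> fst K" and len3: "3 \<le> length cs" and dcs: "distinct cs"
      and ecs: "\<forall>i<length cs. {cs ! i, cs ! ((i + 1) mod length cs)} \<in> snd K"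
      using cyc unfolding is_cycle_def by auto
    define us where "us = map e cs"
    have nthK: "cs ! i \<in> fst K" if "i < length cs" for i using csK that by auto
    have "length us = length cs" unfolding us_def by simp
    moreover have "\<forall>i<length us. us ! i \<in> fst G \<and> f (us ! i) = cs ! i"
      unfolding us_def using nthK eC subC fe by auto
    moreover have "is_cycle G us"
      unfolding is_cycle_def
    proof (intro conjI allI impI)
      show "3 \<le> length us" using len3 unfolding us_def by simp
      show "distinct us" unfolding us_def using dcs einj csK by (simp add: distinct_map inj_on_subset)
      show "set us \<subseteq> fst G" unfolding us_def using csK eC subC by auto
      fix i assume i: "i < length us"
      have "(i + 1) mod length cs < length cs" using len3 by (intro mod_less_divisor) linarith
      then show "{us ! i, us ! ((i + 1) mod length us)} \<in> snd G"
        using i ecs eedge unfolding us_def by simp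
    qed
    ultimately show ?thesis unfolding G_def by blast
  qed
  show ?thesis using cyc lift by blast
qed

end
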